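(* Let $N\ge1$, $q\in\mathbb{C}$ with $0<|q|<1$, $j\in\{1,\dots,N\}$, and $s,w_2\in\mathbb{C}$, and let $C$ be a simple closed contour in the $w_1$-plane encircling $w_1=0$, $s$, $qw_2$, $qw_2^{-1}$ but not $s^{-1}$, $q^{-1}w_2$, $q^{-1}w_2^{-1}$. With $H^{2j-1}_\epsilon(w_1,w_2)$ as in the context, the following operator identities hold: (1) $\oint_C\frac{dw_1}{w_1}\sum_{\epsilon=\pm}\epsilon q^\epsilon\Big(q^\epsilon w_1+\frac{1}{q^\epsilon w_1}\Big)(1-qw_1w_2)H^{2j-1}_\epsilon(w_1,w_2)=\oint_C\frac{dw_1}{w_1}q\Big(qw_1+\frac{1}{qw_1}\Big)(1-w_1^2)H^{2j-1}_+(w_1,w_2)$; (2) $\oint_C\frac{dw_1}{w_1}\sum_{\epsilon=\pm}\epsilon q^\epsilon\Big(q^\epsilon w_1+\frac{1}{q^\epsilon w_1}\Big)(1-sw_1)(1-qw_1w_2)H^{2j-1}_\epsilon(w_1,w_2)=(1-qsw_2)\oint_C\frac{dw_1}{w_1}q\Big(qw_1+\frac{1}{qw_1}\Big)(1-w_1^2)H^{2j-1}_+(w_1,w_2)$; (3) $\oint_C\frac{dw_1}{w_1}\sum_{\epsilon=\pm}\epsilon q^\epsilon\Big(q^\epsilon w_1+\frac{1}{q^\epsilon w_1}\Big)\frac{1-qw_1w_2}{1-s/w_1}H^{2j-1}_\epsilon(w_1,w_2)=(1-qsw_2)\oint_C\frac{dw_1}{w_1}q\Big(qw_1+\frac{1}{qw_1}\Big)\frac{1-w_1^2}{(1-s/w_1)(1-sw_1)}H^{2j-1}_+(w_1,w_2)$;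 (4) $\oint_C\frac{dw_1}{w_1}\sum_{\epsilon=\pm}\epsilon q^\epsilon\Big(q^\epsilon w_1+\frac{1}{q^\epsilon w_1}\Big)w_1(1-qw_1w_2)H^{2j-1}_\epsilon(w_1,w_2)=q^2w_2\oint_C\frac{dw_1}{w_1}\Big(qw_1+\frac{1}{qw_1}\Big)(1-w_1^2)H^{2j-1}_+(w_1,w_2)$. Moreover, the integral $\oint_C\frac{dw_1}{w_1}\Big(qw_1+\frac{1}{qw_1}\Big)\frac{1-w_1^2}{(1-s/w_1)(1-sw_1)}H^{2j-1}_+(w_1,w_2)$ is invariant under $w_2\to w_2^{-1}$.
   Context: $[n]_q=\frac{q^n-q^{-n}}{q-q^{-1}}$. Bosons $a^i_m$ ($1\le i\le 2N$, $m\in\mathbb{Z}$) and $c^j_m$ ($1\le j\le N$) satisfy $[a^i_m,a^k_n]=(-1)^{i+1}\delta_{i,k}\delta_{m+n,0}\frac{[m]_q^2}{m}$, $[c^j_m,c^l_n]=\delta_{j,l}\delta_{m+n,0}\frac{[m]_q^2}{m}$ ($m\ne0$), other commutators zero. Set $A^i_m=(-1)^{i+1}(a^i_m+a^{i+1}_m)$ ($1\le i\le 2N-1$), $A^i_+(z)=-\sum_{m\ge1}\frac{A^i_m}{[m]_q}q^{m/2}z^{-m}$ and $c^j_+(z)=-\sum_{m\ge1}\frac{c^j_m}{[m]_q}z^{-m}$. For $\epsilon=\pm$ (identified with $\pm1$ in exponents), $$H^{2j-1}_\epsilon(w_1,w_2)=\frac{\exp\big(-c^j_+(q^{1+\epsilon}w_1)-c^j_+(q^{1-\epsilon}/w_1)-A^{2j-1}_+(qw_1)-A^{2j-1}_+(q/w_1)\big)}{(1-q^\epsilon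 w_1w_2)(1-q^\epsilon w_1/w_2)}.$$ The exponentials involve only the modes $a_m,c_m$ with $m>0$, so on any vector of the bosonic Fock space their matrix elements are Laurent polynomials in $w_1$; the integrals are understood in this sense. *)

theory Defs
  imports "HOL-Complex_Analysis.Complex_Analysis" "HOL-Library.Poly_Mapping"
begin

definition qint :: "complex \<Rightarrow> nat \<Rightarrow> complex" where
  "qint q m = (q ^ m - inverse q ^ m) / (q - inverse q)"

text \<open>Oscillator labels: ModeA i m stands for the pair a^i_{-m} / a^i_m (m >= 1),
  ModeC j m for c^j_{-m} / c^j_m.\<close>
datatype mode = ModeA nat nat | ModeC nat nat

fun valid_mode :: "nat \<Rightarrow> mode \<Rightarrow> bool" where
  "valid_mode N (ModeA i m) = (1 \<le> i \<and> i \<le> 2 * N \<and> 1 \<le> m)"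
| "valid_mode N (ModeC j m) = (1 \<le> j \<and> j \<le> N \<and> 1 \<le> m)"

text \<open>Commutator constant [b_m, b_{-m}] of each oscillator.\<close>
fun kappa :: "complex \<Rightarrow> mode \<Rightarrow> complex" where
  "kappa q (ModeA i m) = (-1) ^ (i + 1) * (qint q m)\<^sup>2 / of_nat m"
| "kappa q (ModeC j m) = (qint q m)\<^sup>2 / of_nat m"

text \<open>Bosonic Fock space realised as the polynomial ring in the creation modes
  (the variable of a mode x is the creation operator b_{-m}); the vacuum is 1.\<close>
type_synonym fock = "(mode \<Rightarrow>\<^sub>0 nat) \<Rightarrow>\<^sub>0 complex"

definition fock_space :: "nat \<Rightarrow> fock set" where
  "fock_space N = {p::fock. \<forall>\<mu>\<in>Poly_Mapping.keys p. \<forall>x\<in>Poly_Mapping.keys \<mu>. valid_mode N x}"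

text \<open>The annihilation operator b_m of mode x acts as kappa(x) times the partial derivative
  in the variable x.  ann_comb q f is the operator  sum_x f(x) b_x  (finite on every vector).\<close>
definition ann_comb :: "complex \<Rightarrow> (mode \<Rightarrow> complex) \<Rightarrow> fock \<Rightarrow> fock" where
  "ann_comb q f p = (\<Sum>\<mu>\<in>Poly_Mapping.keys p. \<Sum>x\<in>Poly_Mapping.keys \<mu>.
      Poly_Mapping.single (\<mu> - Poly_Mapping.single x 1)
        (f x * kappa q x * of_nat (Poly_Mapping.lookup \<mu> x) * Poly_Mapping.lookup p \<mu>))"

text \<open>Exponential of an operator applied to a vector, given by its coefficient function
  (the series terminates on every Fock vector).\<close>
definition op_exp :: "(fock \<Rightarrow> fock) \<Rightarrow> fock \<Rightarrow> (mode \<Rightarrow>\<^sub>0 nat) \<Rightarrow> complex" where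
  "op_exp D p \<mu> = suminf (\<lambda>k. Poly_Mapping.lookup ((D ^^ k) p) \<mu> / fact k)"

text \<open>c^j_+(z) = - sum_{m>=1} c^j_m/[m]_q z^{-m}, as coefficient function on modes.\<close>
definition cplus :: "complex \<Rightarrow> nat \<Rightarrow> complex \<Rightarrow> mode \<Rightarrow> complex" where
  "cplus q j z x = (case x of
       ModeC j' m \<Rightarrow> if j' = j \<and> 1 \<le> m then - (inverse z ^ m) / qint q m else 0
     | ModeA _ _ \<Rightarrow> 0)"

text \<open>A^i_+(z) = - sum_{m>=1} A^i_m/[m]_q q^{m/2} z^{-m}, with
  A^i_m = (-1)^{i+1}(a^i_m + a^{i+1}_m); qh is a chosen square root of q (q^{m/2} = qh^m).\<close>
definition Aplus :: "complex \<Rightarrow> complex \<Rightarrow> nat \<Rightarrow> complex \<Rightarrow> mode \<Rightarrow> complex" where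
  "Aplus q qh i z x = (case x of
       ModeA i' m \<Rightarrow> if (i' = i \<or> i' = i + 1) \<and> 1 \<le> m
                      then - ((-1) ^ (i + 1) * qh ^ m * inverse z ^ m) / qint q m else 0
     | ModeC _ _ \<Rightarrow> 0)"

definition Hop :: "complex \<Rightarrow> complex \<Rightarrow> nat \<Rightarrow> int \<Rightarrow> complex \<Rightarrow> complex \<Rightarrow> fock
                   \<Rightarrow> (mode \<Rightarrow>\<^sub>0 nat) \<Rightarrow> complex" where
  "Hop q qh j e w1 w2 v \<mu> =
     op_exp (ann_comb q (\<lambda>x. - cplus q j (q powi (1 + e) * w1) x
                             - cplus q j (q powi (1 - e) / w1) x
                             - Aplus q qh (2 * j - 1) (q * w1) x
                             - Aplus q qh (2 * j - 1) (q / w1) x)) v \<mu>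
     / ((1 - q powi e * w1 * w2) * (1 - q powi e * w1 / w2))"

definition oint :: "(real \<Rightarrow> complex) \<Rightarrow> (complex \<Rightarrow> (mode \<Rightarrow>\<^sub>0 nat) \<Rightarrow> complex)
                    \<Rightarrow> (mode \<Rightarrow>\<^sub>0 nat) \<Rightarrow> complex" where
  "oint \<gamma> F \<mu> = contour_integral \<gamma> (\<lambda>w. F w \<mu>)"

end

theory Submission
  imports Defs
begin

lemma one_minus_mul0: "1 - s*w = (0::complex) \<Longrightarrow> s \<noteq> 0 \<and> w = 1/s"
proof -
  assume "1 - s*w = 0"
  then have h: "s*w = 1" by simp
  then have "s \<noteq> 0" by auto
  with h show ?thesis by (auto simp: field_simps)
qed


lemma inv_path_valid:
  fixes \<gamma> :: "real \<Rightarrow> complex"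
  assumes "valid_path \<gamma>" "0 \<notin> path_image \<gamma>"
  shows "valid_path (inverse \<circ> \<gamma>)"
proof (rule valid_path_compose_holomorphic[OF assms(1)])
  show "inverse holomorphic_on -{0}" by (auto intro!: holomorphic_intros)
qed (use assms in auto)

lemma inv_path_integral:
  fixes \<gamma> :: "real \<Rightarrow> complex"
  assumes "valid_path \<gamma>" "0 \<notin> path_image \<gamma>"
  shows "contour_integral (inverse \<circ> \<gamma>) P = contour_integral \<gamma> (\<lambda>w. - P (1/w) / w^2)"
proof -
  have "contour_integral (inverse \<circ> \<gamma>) P = contour_integral \<gamma> (\<lambda>w. deriv inverse w * P (inverse w))"
    by (rule contour_integral_comp_analyticW[where s="-{0}"]) (use assms in \<open>auto intro!: analytic_intros\<close>)
  also have "\<dots> = contour_integral \<gamma> (\<lambda>w. - P (1/w) / w^2)"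
  proof (rule contour_integral_eq)
    fix w assume "w \<in> path_image \<gamma>"
    then have "w \<noteq> 0" using assms by auto
    then have "deriv inverse w = - (inverse w * inverse w)"
      using DERIV_inverse[of w UNIV] DERIV_imp_deriv by (simp add: power2_eq_square divide_inverse)
    then show "deriv inverse w * P (inverse w) = - P (1/w) / w^2"
      by (simp add: power2_eq_square divide_inverse)
  qed
  finally show ?thesis .
qed

lemma inv_path_image: "path_image (inverse \<circ> (\<gamma>::real\<Rightarrow>complex)) = inverse ` path_image \<gamma>"
  by (simp add: path_image_compose)
lemma inv_wind0:
  fixes \<gamma> :: "real \<Rightarrow> complex"
  assumes "valid_path \<gamma>" "0 \<notin> path_image \<gamma>"
  shows "winding_number (inverse \<circ> \<gamma>) 0 = - winding_number \<gamma> 0"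
proof -
  have n0: "0 \<notin> path_image (inverse \<circ> \<gamma>)" using assms by (auto simp: inv_path_image)
  have "winding_number (inverse \<circ> \<gamma>) 0 = 1/(2*pi*\<i>) * contour_integral (inverse \<circ> \<gamma>) (\<lambda>w. 1/(w - 0))"
    by (rule winding_number_valid_path[OF inv_path_valid[OF assms] n0])
  also have "\<dots> = 1/(2*pi*\<i>) * contour_integral \<gamma> (\<lambda>w. - (1/(w - 0)))"
    unfolding inv_path_integral[OF assms]
    by (intro arg_cong2[where f="(*)"] refl contour_integral_eq) (simp add: power2_eq_square)
  also have "\<dots> = - winding_number \<gamma> 0"
    by (simp add: contour_integral_neg winding_number_valid_path[OF assms])
  finally show ?thesis .
qed

lemma inv_windp:
  fixes \<gamma> :: "real \<Rightarrow> complex"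
  assumes "valid_path \<gamma>" "0 \<notin> path_image \<gamma>" "p \<noteq> 0" "p \<notin> path_image \<gamma>"
  shows "winding_number (inverse \<circ> \<gamma>) (1/p) = winding_number \<gamma> p - winding_number \<gamma> 0"
proof -
  have n0: "1/p \<notin> path_image (inverse \<circ> \<gamma>)" using assms by (auto simp: inv_path_image divide_inverse)
  have i1: "(\<lambda>w. 1/(w - p)) contour_integrable_on \<gamma>"
    by (rule contour_integrable_inversediff) (use assms in auto)
  have i2: "(\<lambda>w. 1/(w - 0)) contour_integrable_on \<gamma>"
    by (rule contour_integrable_inversediff) (use assms in auto)
  have "winding_number (inverse \<circ> \<gamma>) (1/p) = 1/(2*pi*\<i>) * contour_integral (inverse \<circ> \<gamma>) (\<lambda>w. 1/(w - 1/p))"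
    by (rule winding_number_valid_path[OF inv_path_valid[OF assms(1,2)] n0])
  also have "\<dots> = 1/(2*pi*\<i>) * contour_integral \<gamma> (\<lambda>w. 1/(w - p) - 1/(w - 0))"
    unfolding inv_path_integral[OF assms(1,2)]
  proof (intro arg_cong2[where f="(*)"] refl contour_integral_eq)
    fix w assume w: "w \<in> path_image \<gamma>"
    then have "w \<noteq> 0" "w \<noteq> p" using assms by auto
    then show "- (1 / (1 / w - 1 / p)) / w\<^sup>2 = 1 / (w - p) - 1 / (w - 0)"
      using assms(3) by (simp add: field_simps power2_eq_square)
  qed
  also have "\<dots> = 1/(2*pi*\<i>) * (contour_integral \<gamma> (\<lambda>w. 1/(w - p)) - contour_integral \<gamma> (\<lambda>w. 1/(w - 0)))"
    using contour_integral_diff[OF i1 i2] by simp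
  also have "\<dots> = winding_number \<gamma> p - winding_number \<gamma> 0"
    by (simp only: right_diff_distrib winding_number_valid_path[OF assms(1,4)] winding_number_valid_path[OF assms(1,2)])
  finally show ?thesis .
qed

lemma key_sym:
  fixes \<gamma> :: "real \<Rightarrow> complex"
  assumes vp: "valid_path \<gamma>" and cl: "pathfinish \<gamma> = pathstart \<gamma>"
    and n0: "0 \<notin> path_image \<gamma>" and fin: "finite pts"
    and holo: "P holomorphic_on UNIV - pts"
    and off: "\<forall>p\<in>pts. p \<notin> path_image \<gamma>"
    and offi: "\<forall>p\<in>pts. p \<noteq> 0 \<longrightarrow> 1/p \<notin> path_image \<gamma> \<and>
                  winding_number \<gamma> p + winding_number \<gamma> (1/p) = winding_number \<gamma> 0"
  shows "contour_integral \<gamma> (\<lambda>w. P w - P (1/w) / w^2) = 0"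
proof -
  define \<delta> where "\<delta> = inverse \<circ> \<gamma>"
  have vd: "valid_path \<delta>" unfolding \<delta>_def by (rule inv_path_valid[OF vp n0])
  have cd: "pathfinish \<delta> = pathstart \<delta>" using cl by (simp add: \<delta>_def pathfinish_compose pathstart_compose)
  have pid: "path_image \<delta> \<subseteq> UNIV - pts"
  proof
    fix u assume "u \<in> path_image \<delta>"
    then obtain w where w: "w \<in> path_image \<gamma>" "u = inverse w" by (auto simp: \<delta>_def inv_path_image)
    have "u \<notin> pts"
    proof
      assume "u \<in> pts"
      show False
      proof (cases "u = 0")
        case True then show ?thesis using w n0 by auto
      next
        case False
        then have "1/u \<notin> path_image \<gamma>" using offi \<open>u \<in> pts\<close> by auto
        then show ?thesis using w by (simp add: divide_inverse)
      qed
    qed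
    then show "u \<in> UNIV - pts" by simp
  qed
  have pig: "path_image \<gamma> \<subseteq> UNIV - pts" using off by auto
  have Ig: "contour_integral \<gamma> P = 2 * pi * \<i> * (\<Sum>p\<in>pts. winding_number \<gamma> p * residue P p)"
    by (rule Residue_theorem[where S=UNIV]) (use fin holo vp cl pig in auto)
  have Id: "contour_integral \<delta> P = 2 * pi * \<i> * (\<Sum>p\<in>pts. winding_number \<delta> p * residue P p)"
    by (rule Residue_theorem[where S=UNIV]) (use fin holo vd cd pid in auto)
  have wsum: "winding_number \<gamma> p + winding_number \<delta> p = 0" if "p \<in> pts" for p
  proof (cases "p = 0")
    case True then show ?thesis using inv_wind0[OF vp n0] by (simp add: \<delta>_def)
  next
    case False
    have "winding_number \<delta> p = winding_number \<delta> (1/(1/p))" by simp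
    also have "\<dots> = winding_number \<gamma> (1/p) - winding_number \<gamma> 0"
      unfolding \<delta>_def by (rule inv_windp[OF vp n0]) (use False offi that in auto)
    finally have e1: "winding_number \<delta> p = winding_number \<gamma> (1/p) - winding_number \<gamma> 0" .
    have "winding_number \<gamma> p + winding_number \<gamma> (1/p) = winding_number \<gamma> 0" using offi that False by blast
    then have e2: "winding_number \<gamma> p = winding_number \<gamma> 0 - winding_number \<gamma> (1/p)" by (simp add: eq_diff_eq)
    show ?thesis by (simp add: e1 e2)
  qed
  have "contour_integral \<gamma> P + contour_integral \<delta> P = 2 * pi * \<i> * (\<Sum>p\<in>pts. (winding_number \<gamma> p + winding_number \<delta> p) * residue P p)"
    by (simp add: Ig Id distrib_left distrib_right sum.distrib)
  also have "\<dots> = 0" using wsum by simp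
  finally have sum0: "contour_integral \<gamma> P + contour_integral \<delta> P = 0" .
  have ip: "P contour_integrable_on \<gamma>"
    by (rule contour_integrable_holomorphic_simple[OF holo _ vp pig]) (use fin in \<open>auto intro: finite_imp_closed\<close>)
  have hol2: "(\<lambda>w. - P (1/w) / w^2) holomorphic_on (UNIV - ({0} \<union> inverse ` pts))"
  proof -
    have "(P \<circ> (\<lambda>w. 1/w)) holomorphic_on (UNIV - ({0} \<union> inverse ` pts))"
      by (rule holomorphic_on_compose_gen[OF _ holo]) (auto intro!: holomorphic_intros simp: divide_inverse, metis image_eqI inverse_inverse_eq)
    then show ?thesis by (auto intro!: holomorphic_intros simp: o_def)
  qed
  have ip2: "(\<lambda>w. - P (1/w) / w^2) contour_integrable_on \<gamma>"
  proof (rule contour_integrable_holomorphic_simple[OF hol2 _ vp])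
    show "open (UNIV - ({0} \<union> inverse ` pts))" using fin by (auto intro: finite_imp_closed)
    show "path_image \<gamma> \<subseteq> UNIV - ({0} \<union> inverse ` pts)"
    proof
      fix w assume w: "w \<in> path_image \<gamma>"
      have "w \<notin> ({0} \<union> inverse ` pts)"
      proof
        assume "w \<in> {0} \<union> inverse ` pts"
        then consider "w = 0" | p where "p \<in> pts" "w = inverse p" by auto
        then show False
        proof cases
          case 1 then show ?thesis using w n0 by auto
        next
          case 2
          then have "p \<noteq> 0" using w n0 by auto
          then show ?thesis using offi 2 w by (auto simp: divide_inverse)
        qed
      qed
      then show "w \<in> UNIV - ({0} \<union> inverse ` pts)" by simp
    qed
  qed
  have "contour_integral \<gamma> (\<lambda>w. P w - P (1/w) / w^2) = contour_integral \<gamma> P + contour_integral \<gamma> (\<lambda>w. - P (1/w) / w^2)"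
    using contour_integral_add[OF ip ip2] by simp
  also have "\<dots> = contour_integral \<gamma> P + contour_integral \<delta> P"
    by (simp only: \<delta>_def inv_path_integral[OF vp n0])
  finally show ?thesis using sum0 by simp
qed



definition tdeg :: "(mode \<Rightarrow>\<^sub>0 nat) \<Rightarrow> nat" where
  "tdeg \<mu> = (\<Sum>x\<in>Poly_Mapping.keys \<mu>. Poly_Mapping.lookup \<mu> x)"

lemma tdeg_dec:
  assumes "x \<in> Poly_Mapping.keys \<mu>"
  shows "tdeg (\<mu> - Poly_Mapping.single x 1) < tdeg \<mu>"
proof -
  define \<nu> where "\<nu> = \<mu> - Poly_Mapping.single x 1"
  have lk: "Poly_Mapping.lookup \<nu> y = Poly_Mapping.lookup \<mu> y - (if x = y then 1 else 0)" for y
    by (simp add: \<nu>_def lookup_minus lookup_single)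
  have sub: "Poly_Mapping.keys \<nu> \<subseteq> Poly_Mapping.keys \<mu>"
    by (auto simp: in_keys_iff lk)
  have "tdeg \<nu> = (\<Sum>y\<in>Poly_Mapping.keys \<mu>. Poly_Mapping.lookup \<nu> y)"
    unfolding tdeg_def by (rule sum.mono_neutral_left) (use sub in \<open>auto simp: in_keys_iff\<close>)
  also have "\<dots> < (\<Sum>y\<in>Poly_Mapping.keys \<mu>. Poly_Mapping.lookup \<mu> y)"
  proof (rule sum_strict_mono_ex1)
    show "\<forall>y\<in>Poly_Mapping.keys \<mu>. Poly_Mapping.lookup \<nu> y \<le> Poly_Mapping.lookup \<mu> y"
      by (simp add: lk)
    show "\<exists>y\<in>Poly_Mapping.keys \<mu>. Poly_Mapping.lookup \<nu> y < Poly_Mapping.lookup \<mu> y"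
      using assms by (intro bexI[of _ x]) (auto simp: lk in_keys_iff)
  qed simp
  finally show ?thesis by (simp add: \<nu>_def tdeg_def)
qed

definition stp :: "(mode \<Rightarrow>\<^sub>0 nat) set \<Rightarrow> (mode \<Rightarrow>\<^sub>0 nat) set" where
  "stp K = (\<lambda>(\<mu>, x). \<mu> - Poly_Mapping.single x 1) ` (SIGMA \<mu>:K. Poly_Mapping.keys \<mu>)"

lemma finite_stp: "finite K \<Longrightarrow> finite (stp K)"
  unfolding stp_def by (auto intro!: finite_imageI finite_SigmaI)

lemma ann_keys: "Poly_Mapping.keys p \<subseteq> K \<Longrightarrow> Poly_Mapping.keys (ann_comb q f p) \<subseteq> stp K"
proof
  assume K: "Poly_Mapping.keys p \<subseteq> K"
  fix \<nu> assume "\<nu> \<in> Poly_Mapping.keys (ann_comb q f p)"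
  then obtain \<mu> x where "\<mu> \<in> Poly_Mapping.keys p" "x \<in> Poly_Mapping.keys \<mu>" "\<nu> = \<mu> - Poly_Mapping.single x 1"
    unfolding ann_comb_def by (auto dest!: subsetD[OF keys_sum] split: if_splits)
  then show "\<nu> \<in> stp K" unfolding stp_def using K by force
qed

lemma ann_lookup:
  assumes "finite K" "Poly_Mapping.keys p \<subseteq> K"
  shows "Poly_Mapping.lookup (ann_comb q f p) \<nu> =
    (\<Sum>\<mu>\<in>K. \<Sum>x\<in>Poly_Mapping.keys \<mu>. if \<mu> - Poly_Mapping.single x 1 = \<nu>
         then f x * kappa q x * of_nat (Poly_Mapping.lookup \<mu> x) * Poly_Mapping.lookup p \<mu> else 0)"
proof -
  have "Poly_Mapping.lookup (ann_comb q f p) \<nu> =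
    (\<Sum>\<mu>\<in>Poly_Mapping.keys p. \<Sum>x\<in>Poly_Mapping.keys \<mu>. if \<mu> - Poly_Mapping.single x 1 = \<nu>
         then f x * kappa q x * of_nat (Poly_Mapping.lookup \<mu> x) * Poly_Mapping.lookup p \<mu> else 0)"
    unfolding ann_comb_def by (simp add: lookup_sum lookup_single when_def)
  also have "\<dots> = (\<Sum>\<mu>\<in>K. \<Sum>x\<in>Poly_Mapping.keys \<mu>. if \<mu> - Poly_Mapping.single x 1 = \<nu>
         then f x * kappa q x * of_nat (Poly_Mapping.lookup \<mu> x) * Poly_Mapping.lookup p \<mu> else 0)"
    by (rule sum.mono_neutral_left) (use assms in \<open>auto simp: in_keys_iff intro!: sum.neutral\<close>)
  finally show ?thesis .
qed

lemma holo_if: "g holomorphic_on S \<Longrightarrow> (\<lambda>w. if c then g w else 0) holomorphic_on S"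
  by (cases c) auto

lemma iter_holo:
  assumes "\<And>x. (\<lambda>w. f w x) holomorphic_on S"
  shows "\<exists>K. finite K \<and> (\<forall>w. Poly_Mapping.keys ((ann_comb q (f w) ^^ k) v) \<subseteq> K) \<and>
     (\<forall>\<nu>. (\<lambda>w. Poly_Mapping.lookup ((ann_comb q (f w) ^^ k) v) \<nu>) holomorphic_on S)"
proof (induction k)
  case 0
  then show ?case by (intro exI[of _ "Poly_Mapping.keys v"]) auto
next
  case (Suc k)
  then obtain K where K: "finite K" "\<And>w. Poly_Mapping.keys ((ann_comb q (f w) ^^ k) v) \<subseteq> K"
     "\<And>\<nu>. (\<lambda>w. Poly_Mapping.lookup ((ann_comb q (f w) ^^ k) v) \<nu>) holomorphic_on S" by blast
  show ?case
  proof (intro exI[of _ "stp K"] conjI allI)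
    show "finite (stp K)" by (rule finite_stp[OF K(1)])
    show "Poly_Mapping.keys ((ann_comb q (f w) ^^ Suc k) v) \<subseteq> stp K" for w
      by (simp add: ann_keys K(2))
    show "(\<lambda>w. Poly_Mapping.lookup ((ann_comb q (f w) ^^ Suc k) v) \<nu>) holomorphic_on S" for \<nu>
      by (simp add: ann_lookup[OF K(1) K(2)])
         (intro holomorphic_intros holo_if assms K(3))
  qed
qed

lemma iter_deg:
  assumes "\<forall>\<mu>\<in>Poly_Mapping.keys p. tdeg \<mu> < B"
  shows "\<forall>\<nu>\<in>Poly_Mapping.keys ((ann_comb q f ^^ k) p). tdeg \<nu> + k < B"
proof (induction k)
  case 0 then show ?case using assms by simp
next
  case (Suc k)
  show ?case
  proof
    fix \<nu> assume "\<nu> \<in> Poly_Mapping.keys ((ann_comb q f ^^ Suc k) p)"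
    then have "\<nu> \<in> stp (Poly_Mapping.keys ((ann_comb q f ^^ k) p))"
      using ann_keys[OF order.refl] by auto
    then obtain \<mu> x where \<mu>: "\<mu> \<in> Poly_Mapping.keys ((ann_comb q f ^^ k) p)" "x \<in> Poly_Mapping.keys \<mu>"
      "\<nu> = \<mu> - Poly_Mapping.single x 1" by (auto simp: stp_def)
    have "tdeg \<nu> < tdeg \<mu>" using tdeg_dec[OF \<mu>(2)] \<mu>(3) by simp
    then show "tdeg \<nu> + Suc k < B" using Suc \<mu>(1) by fastforce
  qed
qed

lemma op_exp_finite:
  "\<exists>B. \<forall>f \<mu>. op_exp (ann_comb q f) v \<mu> = (\<Sum>k<B. Poly_Mapping.lookup ((ann_comb q f ^^ k) v) \<mu> / fact k)"
proof -
  define B where "B = Suc (\<Sum>\<mu>\<in>Poly_Mapping.keys v. tdeg \<mu>)"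
  have hb: "\<forall>\<mu>\<in>Poly_Mapping.keys v. tdeg \<mu> < B"
    unfolding B_def using member_le_sum[of _ "Poly_Mapping.keys v" tdeg] by (auto simp: less_Suc_eq_le)
  show ?thesis
  proof (intro exI[of _ B] allI)
    fix f \<mu>
    have z: "Poly_Mapping.lookup ((ann_comb q f ^^ k) v) \<mu> / fact k = 0" if "k \<notin> {..<B}" for k
    proof -
      have "Poly_Mapping.keys ((ann_comb q f ^^ k) v) = {}"
        using iter_deg[OF hb, where q=q and f=f and k=k] that by fastforce
      then show ?thesis by simp
    qed
    show "op_exp (ann_comb q f) v \<mu> = (\<Sum>k<B. Poly_Mapping.lookup ((ann_comb q f ^^ k) v) \<mu> / fact k)"
      unfolding op_exp_def by (rule suminf_finite) (use z in auto)
  qed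
qed

lemma op_exp_holo:
  assumes "\<And>x. (\<lambda>w. f w x) holomorphic_on S"
  shows "(\<lambda>w. op_exp (ann_comb q (f w)) v \<mu>) holomorphic_on S"
proof -
  obtain B where B: "\<And>f \<mu>. op_exp (ann_comb q f) v \<mu> = (\<Sum>k<B. Poly_Mapping.lookup ((ann_comb q f ^^ k) v) \<mu> / fact k)"
    using op_exp_finite by blast
  have h: "(\<lambda>w. Poly_Mapping.lookup ((ann_comb q (f w) ^^ k) v) \<mu>) holomorphic_on S" for k
    using iter_holo[where f=f and q=q and k=k and v=v and S=S, OF assms] by blast
  show ?thesis unfolding B by (intro holomorphic_intros h) simp
qed



definition fco :: "complex \<Rightarrow> complex \<Rightarrow> nat \<Rightarrow> complex \<Rightarrow> mode \<Rightarrow> complex" where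
  "fco q qh j w = (\<lambda>x. - cplus q j (q^2 * w) x - cplus q j (1/w) x
       - Aplus q qh (2*j-1) (q*w) x - Aplus q qh (2*j-1) (q/w) x)"

lemma Hop_pos: "Hop q qh j 1 w w2 v \<mu> = op_exp (ann_comb q (fco q qh j w)) v \<mu> / ((1 - q*w*w2)*(1 - q*w/w2))"
  unfolding Hop_def fco_def by (simp add: power2_eq_square)

lemma Hop_neg: "Hop q qh j (-1) w w2 v \<mu> = op_exp (ann_comb q (fco q qh j (1/w))) v \<mu> / ((1 - w*w2/q)*(1 - w/(q*w2)))"
proof -
  have e: "(\<lambda>x. - cplus q j (q powi (1 + - 1) * w) x - cplus q j (q powi (1 - - 1) / w) x
             - Aplus q qh (2 * j - 1) (q * w) x - Aplus q qh (2 * j - 1) (q / w) x) = fco q qh j (1/w)"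
    by (rule ext) (simp add: fco_def power2_eq_square divide_inverse algebra_simps)
  show ?thesis unfolding Hop_def e by (simp add: divide_inverse mult_ac)
qed

lemma fco_holo: "q \<noteq> 0 \<Longrightarrow> (\<lambda>w. fco q qh j w x) holomorphic_on -{0}"
  unfolding fco_def cplus_def Aplus_def
  by (cases x) (auto intro!: holomorphic_intros holo_if)



definition Tf :: "complex \<Rightarrow> complex \<Rightarrow> (complex \<Rightarrow> complex) \<Rightarrow> complex \<Rightarrow> complex" where
  "Tf q w2 F w = q * (q*w + 1/(q*w)) * F w / ((1 - q*w*w2)*(1 - q*w/w2))"

locale algctx =
  fixes q w w2 s :: complex and F :: "complex \<Rightarrow> complex" and H :: "int \<Rightarrow> complex"
  assumes nz: "q \<noteq> 0" "w2 \<noteq> 0" "w \<noteq> 0" "w \<noteq> 1/(q*w2)" "w \<noteq> w2/q" "w \<noteq> q*w2" "w \<noteq> q/w2"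
    and Hp: "H 1 = F w / ((1 - q*w*w2)*(1 - q*w/w2))"
    and Hm: "H (-1) = F (1/w) / ((1 - w*w2/q)*(1 - w/(q*w2)))"
begin

lemma dd: "(1 - q*w*w2) * inverse (1 - q*w*w2) = 1"
  "(1 - q*w/w2) * inverse (1 - q*w/w2) = 1"
  "(1 - w*w2/q) * inverse (1 - w*w2/q) = 1"
  "(1 - w/(q*w2)) * inverse (1 - w/(q*w2)) = 1"
  "(1 - q*(1/w)*w2) * inverse (1 - q*(1/w)*w2) = 1"
  "(1 - q*(1/w)/w2) * inverse (1 - q*(1/w)/w2) = 1"
  "q * inverse q = 1" "w * inverse w = 1" "w2 * inverse w2 = 1"
  using nz by (auto simp: field_simps)

lemma sumH: "(\<Sum>e\<in>{1, -1::int}. g e * H e) = g 1 * H 1 + g (-1) * H (-1)"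
  by simp

lemma alg1:
  "1 / w * (\<Sum>e\<in>{1, -1::int}. of_int e * q powi e
            * (q powi e * w + 1 / (q powi e * w)) * (1 - q * w * w2) * H e)
       = 1 / w * q * (q * w + 1 / (q * w)) * (1 - w ^ 2) * H 1
         + (Tf q w2 F w * (w - q*w2) - Tf q w2 F (1/w) * (1/w - q*w2) / w^2)"
  using dd unfolding Tf_def sumH Hp Hm
  apply (simp add: divide_inverse power2_eq_square inverse_mult_distrib)
  apply algebra
  done

lemma alg2:
  "1 / w * (\<Sum>e\<in>{1, -1::int}. of_int e * q powi e
            * (q powi e * w + 1 / (q powi e * w)) * (1 - s * w) * (1 - q * w * w2) * H e)
       = (1 - q * s * w2) * (1 / w * q * (q * w + 1 / (q * w)) * (1 - w ^ 2) * H 1)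
         + (Tf q w2 F w * (w - s) * (w - q*w2) / w - Tf q w2 F (1/w) * (1/w - s) * (1/w - q*w2) / (1/w) / w^2)"
  using dd unfolding Tf_def sumH Hp Hm
  apply (simp add: divide_inverse power2_eq_square inverse_mult_distrib)
  apply algebra
  done

lemma alg4:
  "1 / w * (\<Sum>e\<in>{1, -1::int}. of_int e * q powi e
            * (q powi e * w + 1 / (q powi e * w)) * w * (1 - q * w * w2) * H e)
       = q ^ 2 * w2 * (1 / w * (q * w + 1 / (q * w)) * (1 - w ^ 2) * H 1)
         + (Tf q w2 F w * (w - q*w2) / w - Tf q w2 F (1/w) * (1/w - q*w2) / (1/w) / w^2)"
  using dd unfolding Tf_def sumH Hp Hm
  apply (simp add: divide_inverse power2_eq_square inverse_mult_distrib)
  apply algebra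
  done

lemma alg3:
  assumes "w \<noteq> s" "s * w \<noteq> 1"
  shows "1 / w * (\<Sum>e\<in>{1, -1::int}. of_int e * q powi e
            * (q powi e * w + 1 / (q powi e * w)) * ((1 - q * w * w2) / (1 - s / w)) * H e)
       = (1 - q * s * w2) * (1 / w * q * (q * w + 1 / (q * w)) * ((1 - w ^ 2) / ((1 - s / w) * (1 - s * w))) * H 1)
         + (Tf q w2 F w * (w - q*w2) / (1 - s*w) - Tf q w2 F (1/w) * (1/w - q*w2) / (1 - s*(1/w)) / w^2)"
proof -
  have e: "(1 - s/w) * inverse (1 - s/w) = 1" "(1 - s*w) * inverse (1 - s*w) = 1"
    "(1 - s*(1/w)) * inverse (1 - s*(1/w)) = 1"
    using assms nz by (auto simp: field_simps)
  show ?thesis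
  using dd e unfolding Tf_def sumH Hp Hm
  apply (simp add: divide_inverse power2_eq_square inverse_mult_distrib)
  apply algebra
  done
qed

end



lemma combine:
  fixes \<gamma> :: "real \<Rightarrow> complex"
  assumes vp: "valid_path \<gamma>" and cl: "pathfinish \<gamma> = pathstart \<gamma>"
    and n0: "0 \<notin> path_image \<gamma>" and fin: "finite pts"
    and holo: "A holomorphic_on UNIV - pts"
    and off: "\<forall>p\<in>pts. p \<notin> path_image \<gamma>"
    and offi: "\<forall>p\<in>pts. p \<noteq> 0 \<longrightarrow> 1/p \<notin> path_image \<gamma> \<and>
                  winding_number \<gamma> p + winding_number \<gamma> (1/p) = winding_number \<gamma> 0"
    and hL: "fL holomorphic_on S" and hR: "fR holomorphic_on S" and oS: "open S"
    and pS: "path_image \<gamma> \<subseteq> S"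
    and eq: "\<And>w. w \<in> path_image \<gamma> \<Longrightarrow> fL w = fR w + (A w - A (1/w) / w^2)"
  shows "contour_integral \<gamma> fL = contour_integral \<gamma> fR"
proof -
  have iL: "fL contour_integrable_on \<gamma>" by (rule contour_integrable_holomorphic_simple[OF hL oS vp pS])
  have iR: "fR contour_integrable_on \<gamma>" by (rule contour_integrable_holomorphic_simple[OF hR oS vp pS])
  have iA: "(\<lambda>w. A w - A (1/w) / w^2) contour_integrable_on \<gamma>"
    by (rule contour_integrable_eq[OF contour_integrable_diff[OF iL iR]]) (use eq in auto)
  have "contour_integral \<gamma> fL = contour_integral \<gamma> (\<lambda>w. fR w + (A w - A (1/w) / w^2))"
    by (rule contour_integral_eq) (use eq in auto)
  also have "\<dots> = contour_integral \<gamma> fR + contour_integral \<gamma> (\<lambda>w. A w - A (1/w) / w^2)"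
    by (rule contour_integral_add[OF iR iA])
  also have "contour_integral \<gamma> (\<lambda>w. A w - A (1/w) / w^2) = 0"
    by (rule key_sym[OF vp cl n0 fin holo off offi])
  finally show ?thesis by simp
qed

lemma wn_same:
  fixes \<gamma> :: "real \<Rightarrow> complex"
  assumes "simple_path \<gamma>" "pathfinish \<gamma> = pathstart \<gamma>"
    "a \<notin> path_image \<gamma>" "b \<notin> path_image \<gamma>" "winding_number \<gamma> a \<noteq> 0" "winding_number \<gamma> b \<noteq> 0"
  shows "winding_number \<gamma> a = winding_number \<gamma> b"
proof -
  have pa: "path \<gamma>" using assms(1) by (simp add: simple_path_imp_path)
  have ins: "z \<in> inside (path_image \<gamma>)" if "z \<notin> path_image \<gamma>" "winding_number \<gamma> z \<noteq> 0" for z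
  proof (rule ccontr)
    assume "z \<notin> inside (path_image \<gamma>)"
    then have "z \<in> outside (path_image \<gamma>)" using that inside_Un_outside by blast
    then show False using winding_number_zero_in_outside[OF pa assms(2)] that by blast
  qed
  show ?thesis
    using simple_closed_path_winding_number_inside[OF assms(1)] ins[OF assms(3,5)] ins[OF assms(4,6)]
    by metis
qed

lemma F_holo: "q \<noteq> 0 \<Longrightarrow> (\<lambda>u. op_exp (ann_comb q (fco q qh j u)) v \<mu>) holomorphic_on -{0}"
  by (rule op_exp_holo) (rule fco_holo)

lemma Hp_holo:
  assumes "q \<noteq> 0" "w2 \<noteq> 0" "S \<subseteq> -{0, 1/(q*w2), w2/q}"
  shows "(\<lambda>w. Hop q qh j 1 w w2 v \<mu>) holomorphic_on S"
proof -
  have "(\<lambda>w. op_exp (ann_comb q (fco q qh j w)) v \<mu> / ((1 - q*w*w2)*(1 - q*w/w2))) holomorphic_on S"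
  proof (intro holomorphic_intros)
    show "(\<lambda>w. op_exp (ann_comb q (fco q qh j w)) v \<mu>) holomorphic_on S"
      by (rule holomorphic_on_subset[OF F_holo[OF assms(1)]]) (use assms(3) in auto)
    fix w assume "w \<in> S"
    then have "w \<noteq> 0" "w \<noteq> 1/(q*w2)" "w \<noteq> w2/q" using assms(3) by auto
    then have "1 - q*w*w2 \<noteq> 0" "1 - q*w/w2 \<noteq> 0" using assms(1,2) by (auto simp: field_simps)
    then show "(1 - q*w*w2)*(1 - q*w/w2) \<noteq> 0" by simp
  qed (use assms in auto)
  then show ?thesis by (simp add: Hop_pos)
qed

lemma Hm_holo:
  assumes "q \<noteq> 0" "w2 \<noteq> 0" "S \<subseteq> -{0, q*w2, q/w2}"
  shows "(\<lambda>w. Hop q qh j (-1) w w2 v \<mu>) holomorphic_on S"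
proof -
  have c: "((\<lambda>u. op_exp (ann_comb q (fco q qh j u)) v \<mu>) \<circ> (\<lambda>w. 1/w)) holomorphic_on S"
    by (rule holomorphic_on_compose_gen[OF _ F_holo[OF assms(1)]]) (use assms(3) in \<open>auto intro!: holomorphic_intros\<close>)
  have "(\<lambda>w. op_exp (ann_comb q (fco q qh j (1/w))) v \<mu> / ((1 - w*w2/q)*(1 - w/(q*w2)))) holomorphic_on S"
  proof (intro holomorphic_intros)
    show "(\<lambda>w. op_exp (ann_comb q (fco q qh j (1/w))) v \<mu>) holomorphic_on S"
      using c by (simp add: o_def)
    fix w assume "w \<in> S"
    then have "w \<noteq> 0" "w \<noteq> q*w2" "w \<noteq> q/w2" using assms(3) by auto
    then have "1 - w*w2/q \<noteq> 0" "1 - w/(q*w2) \<noteq> 0" using assms(1,2) by (auto simp: field_simps)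
    then show "(1 - w*w2/q)*(1 - w/(q*w2)) \<noteq> 0" by simp
  qed (use assms in auto)
  then show ?thesis by (simp add: Hop_neg)
qed

lemma H_holo:
  assumes "e \<in> {1, -1}" "q \<noteq> 0" "w2 \<noteq> 0" "S \<subseteq> -{0, 1/(q*w2), w2/q, q*w2, q/w2}"
  shows "(\<lambda>w. Hop q qh j e w w2 v \<mu>) holomorphic_on S"
  using assms Hp_holo[of q w2 S qh j v \<mu>] Hm_holo[of q w2 S qh j v \<mu>] by auto

lemma Tf_holo:
  assumes "q \<noteq> 0" "w2 \<noteq> 0" "S \<subseteq> -{0, 1/(q*w2), w2/q}"
  shows "Tf q w2 (\<lambda>u. op_exp (ann_comb q (fco q qh j u)) v \<mu>) holomorphic_on S"
  unfolding Tf_def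
proof (intro holomorphic_intros)
  show "(\<lambda>w. op_exp (ann_comb q (fco q qh j w)) v \<mu>) holomorphic_on S"
    by (rule holomorphic_on_subset[OF F_holo[OF assms(1)]]) (use assms(3) in auto)
  fix w assume "w \<in> S"
  then have "w \<noteq> 0" "w \<noteq> 1/(q*w2)" "w \<noteq> w2/q" using assms(3) by auto
  then have "1 - q*w*w2 \<noteq> 0" "1 - q*w/w2 \<noteq> 0" using assms(1,2) by (auto simp: field_simps)
  then show "(1 - q*w*w2)*(1 - q*w/w2) \<noteq> 0" "q * w \<noteq> 0" "w2 \<noteq> 0" using assms(1,2) \<open>w\<noteq>0\<close> by auto
qed



lemma mk_ctx:
  assumes "q \<noteq> 0" "w2 \<noteq> 0" "w \<noteq> 0" "w \<noteq> 1/(q*w2)" "w \<noteq> w2/q" "w \<noteq> q*w2" "w \<noteq> q/w2"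
  shows "algctx q w w2 (\<lambda>u. op_exp (ann_comb q (fco q qh j u)) v \<mu>) (\<lambda>e. Hop q qh j e w w2 v \<mu>)"
  by unfold_locales (use assms in \<open>simp_all add: Hop_pos Hop_neg\<close>)

theorem mainTheorem2:
  fixes N j :: nat and q qh s w2 :: complex and \<gamma> :: "real \<Rightarrow> complex"
  assumes "1 \<le> N" and "1 \<le> j" and "j \<le> N"
    and "q \<noteq> 0" and "norm q < 1" and "qh ^ 2 = q"
    and "w2 \<noteq> 0"
    and "valid_path \<gamma>" and "simple_path \<gamma>" and "pathfinish \<gamma> = pathstart \<gamma>"
    and "\<forall>z\<in>{0, s, q * w2, q / w2}. z \<notin> path_image \<gamma> \<and> winding_number \<gamma> z \<noteq> 0"
    and "\<forall>z\<in>{w2 / q, 1 / (q * w2)}. z \<notin> path_image \<gamma> \<and> winding_number \<gamma> z = 0"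
    and "s \<noteq> 0 \<Longrightarrow> 1 / s \<notin> path_image \<gamma> \<and> winding_number \<gamma> (1 / s) = 0"
  shows "\<forall>v\<in>fock_space N.
     oint \<gamma> (\<lambda>w1 \<mu>. 1 / w1 * (\<Sum>e\<in>{1, -1::int}. of_int e * q powi e
            * (q powi e * w1 + 1 / (q powi e * w1)) * (1 - q * w1 * w2) * Hop q qh j e w1 w2 v \<mu>))
     = oint \<gamma> (\<lambda>w1 \<mu>. 1 / w1 * q * (q * w1 + 1 / (q * w1)) * (1 - w1 ^ 2) * Hop q qh j 1 w1 w2 v \<mu>)
   \<and> oint \<gamma> (\<lambda>w1 \<mu>. 1 / w1 * (\<Sum>e\<in>{1, -1::int}. of_int e * q powi e
            * (q powi e * w1 + 1 / (q powi e * w1)) * (1 - s * w1) * (1 - q * w1 * w2)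
            * Hop q qh j e w1 w2 v \<mu>))
     = (\<lambda>\<mu>. (1 - q * s * w2) * oint \<gamma> (\<lambda>w1 \<mu>. 1 / w1 * q * (q * w1 + 1 / (q * w1)) * (1 - w1 ^ 2)
            * Hop q qh j 1 w1 w2 v \<mu>) \<mu>)
   \<and> oint \<gamma> (\<lambda>w1 \<mu>. 1 / w1 * (\<Sum>e\<in>{1, -1::int}. of_int e * q powi e
            * (q powi e * w1 + 1 / (q powi e * w1)) * ((1 - q * w1 * w2) / (1 - s / w1))
            * Hop q qh j e w1 w2 v \<mu>))
     = (\<lambda>\<mu>. (1 - q * s * w2) * oint \<gamma> (\<lambda>w1 \<mu>. 1 / w1 * q * (q * w1 + 1 / (q * w1))
            * ((1 - w1 ^ 2) / ((1 - s / w1) * (1 - s * w1))) * Hop q qh j 1 w1 w2 v \<mu>) \<mu>)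
   \<and> oint \<gamma> (\<lambda>w1 \<mu>. 1 / w1 * (\<Sum>e\<in>{1, -1::int}. of_int e * q powi e
            * (q powi e * w1 + 1 / (q powi e * w1)) * w1 * (1 - q * w1 * w2) * Hop q qh j e w1 w2 v \<mu>))
     = (\<lambda>\<mu>. q ^ 2 * w2 * oint \<gamma> (\<lambda>w1 \<mu>. 1 / w1 * (q * w1 + 1 / (q * w1)) * (1 - w1 ^ 2)
            * Hop q qh j 1 w1 w2 v \<mu>) \<mu>)
   \<and> oint \<gamma> (\<lambda>w1 \<mu>. 1 / w1 * (q * w1 + 1 / (q * w1))
            * ((1 - w1 ^ 2) / ((1 - s / w1) * (1 - s * w1))) * Hop q qh j 1 w1 w2 v \<mu>)
     = oint \<gamma> (\<lambda>w1 \<mu>. 1 / w1 * (q * w1 + 1 / (q * w1))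
            * ((1 - w1 ^ 2) / ((1 - s / w1) * (1 - s * w1))) * Hop q qh j 1 w1 (inverse w2) v \<mu>)"
proof (intro ballI conjI)
  fix v assume "v \<in> fock_space N"
  note q0 = \<open>q \<noteq> 0\<close> and w20 = \<open>w2 \<noteq> 0\<close> and vp = \<open>valid_path \<gamma>\<close> and cl = \<open>pathfinish \<gamma> = pathstart \<gamma>\<close>
    and sp = \<open>simple_path \<gamma>\<close>
  have n0: "0 \<notin> path_image \<gamma>" and wn0: "winding_number \<gamma> 0 \<noteq> 0"
    and ns: "s \<notin> path_image \<gamma>" and wns: "winding_number \<gamma> s \<noteq> 0"
    and nqw: "q*w2 \<notin> path_image \<gamma>" and wnqw: "winding_number \<gamma> (q*w2) \<noteq> 0"
    and nqd: "q/w2 \<notin> path_image \<gamma>" and wnqd: "winding_number \<gamma> (q/w2) \<noteq> 0"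
    and no1: "w2/q \<notin> path_image \<gamma>" and wo1: "winding_number \<gamma> (w2/q) = 0"
    and no2: "1/(q*w2) \<notin> path_image \<gamma>" and wo2: "winding_number \<gamma> (1/(q*w2)) = 0"
    using assms(11,12) by auto
  have ns': "1/s \<notin> path_image \<gamma>" using assms(13) n0 by (cases "s = 0") auto
  have wqw: "winding_number \<gamma> (q*w2) = winding_number \<gamma> 0"
    by (rule wn_same[OF sp cl nqw n0 wnqw wn0])
  have wqd: "winding_number \<gamma> (q/w2) = winding_number \<gamma> 0"
    by (rule wn_same[OF sp cl nqd n0 wnqd wn0])
  have wss: "winding_number \<gamma> s = winding_number \<gamma> 0"
    by (rule wn_same[OF sp cl ns n0 wns wn0])
  define S0 where "S0 = -{0, s, 1/s, q*w2, q/w2, w2/q, 1/(q*w2)}"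
  have oS0: "open S0" unfolding S0_def by (intro open_Compl finite_imp_closed) auto
  have pS0: "path_image \<gamma> \<subseteq> S0" unfolding S0_def using n0 ns ns' nqw nqd no1 no2 by auto
  define P where "P = {0, 1/(q*w2), w2/q}"
  have finP: "finite P" by (simp add: P_def)
  have offP: "\<forall>p\<in>P. p \<notin> path_image \<gamma>" using n0 no1 no2 by (auto simp: P_def)
  have offiP: "\<forall>p\<in>P. p \<noteq> 0 \<longrightarrow> 1/p \<notin> path_image \<gamma> \<and>
                  winding_number \<gamma> p + winding_number \<gamma> (1/p) = winding_number \<gamma> 0"
    using nqw nqd wo1 wo2 wqw wqd q0 w20 by (auto simp: P_def)
  have ctx: "algctx q w w2 (\<lambda>u. op_exp (ann_comb q (fco q qh j u)) v \<mu>) (\<lambda>e. Hop q qh j e w w2 v \<mu>)"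
    if "w \<in> path_image \<gamma>" for w \<mu>
  proof (rule mk_ctx[OF q0 w20])
    show "w \<noteq> 0" "w \<noteq> 1/(q*w2)" "w \<noteq> w2/q" "w \<noteq> q*w2" "w \<noteq> q/w2"
      using that n0 no1 no2 nqw nqd by auto
  qed
  show "oint \<gamma> (\<lambda>w1 \<mu>. 1 / w1 * (\<Sum>e\<in>{1, -1::int}. of_int e * q powi e
            * (q powi e * w1 + 1 / (q powi e * w1)) * (1 - q * w1 * w2) * Hop q qh j e w1 w2 v \<mu>))
     = oint \<gamma> (\<lambda>w1 \<mu>. 1 / w1 * q * (q * w1 + 1 / (q * w1)) * (1 - w1 ^ 2) * Hop q qh j 1 w1 w2 v \<mu>)"
    unfolding oint_def
  proof (rule ext)
    fix \<mu>
    show "contour_integral \<gamma> (\<lambda>w1. 1 / w1 * (\<Sum>e\<in>{1, -1::int}. of_int e * q powi e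
            * (q powi e * w1 + 1 / (q powi e * w1)) * (1 - q * w1 * w2) * Hop q qh j e w1 w2 v \<mu>))
      = contour_integral \<gamma> (\<lambda>w1. 1 / w1 * q * (q * w1 + 1 / (q * w1)) * (1 - w1 ^ 2) * Hop q qh j 1 w1 w2 v \<mu>)"
    proof (rule combine[OF vp cl n0 finP _ offP offiP _ _ oS0 pS0])
      show "(\<lambda>w. Tf q w2 (\<lambda>u. op_exp (ann_comb q (fco q qh j u)) v \<mu>) w * (w - q*w2)) holomorphic_on UNIV - P"
        by (intro holomorphic_intros Tf_holo[OF q0 w20]) (auto simp: P_def)
      show "(\<lambda>w1. 1 / w1 * (\<Sum>e\<in>{1, -1::int}. of_int e * q powi e
            * (q powi e * w1 + 1 / (q powi e * w1)) * (1 - q * w1 * w2) * Hop q qh j e w1 w2 v \<mu>)) holomorphic_on S0"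
        by (auto intro!: holomorphic_intros H_holo simp: S0_def q0 w20)
      show "(\<lambda>w1. 1 / w1 * q * (q * w1 + 1 / (q * w1)) * (1 - w1 ^ 2) * Hop q qh j 1 w1 w2 v \<mu>) holomorphic_on S0"
        by (auto intro!: holomorphic_intros H_holo simp: S0_def q0 w20)
      fix w assume "w \<in> path_image \<gamma>"
      then show "1 / w * (\<Sum>e\<in>{1, -1::int}. of_int e * q powi e
            * (q powi e * w + 1 / (q powi e * w)) * (1 - q * w * w2) * Hop q qh j e w w2 v \<mu>) =
          1 / w * q * (q * w + 1 / (q * w)) * (1 - w ^ 2) * Hop q qh j 1 w w2 v \<mu> +
          (Tf q w2 (\<lambda>u. op_exp (ann_comb q (fco q qh j u)) v \<mu>) w * (w - q*w2) -
           Tf q w2 (\<lambda>u. op_exp (ann_comb q (fco q qh j u)) v \<mu>) (1/w) * (1/w - q*w2) / w^2)"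
        by (rule algctx.alg1[OF ctx])
    qed
  qed
  show "oint \<gamma> (\<lambda>w1 \<mu>. 1 / w1 * (\<Sum>e\<in>{1, -1::int}. of_int e * q powi e
            * (q powi e * w1 + 1 / (q powi e * w1)) * (1 - s * w1) * (1 - q * w1 * w2)
            * Hop q qh j e w1 w2 v \<mu>))
     = (\<lambda>\<mu>. (1 - q * s * w2) * oint \<gamma> (\<lambda>w1 \<mu>. 1 / w1 * q * (q * w1 + 1 / (q * w1)) * (1 - w1 ^ 2)
            * Hop q qh j 1 w1 w2 v \<mu>) \<mu>)"
    unfolding oint_def
  proof (rule ext)
    fix \<mu>
    have hG: "(\<lambda>w1. 1 / w1 * q * (q * w1 + 1 / (q * w1)) * (1 - w1 ^ 2) * Hop q qh j 1 w1 w2 v \<mu>) holomorphic_on S0"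
      by (auto intro!: holomorphic_intros H_holo simp: S0_def q0 w20)
    have "contour_integral \<gamma> (\<lambda>w1. 1 / w1 * (\<Sum>e\<in>{1, -1::int}. of_int e * q powi e
            * (q powi e * w1 + 1 / (q powi e * w1)) * (1 - s * w1) * (1 - q * w1 * w2) * Hop q qh j e w1 w2 v \<mu>))
      = contour_integral \<gamma> (\<lambda>w1. (1 - q * s * w2) * (1 / w1 * q * (q * w1 + 1 / (q * w1)) * (1 - w1 ^ 2) * Hop q qh j 1 w1 w2 v \<mu>))"
    proof (rule combine[OF vp cl n0 finP _ offP offiP _ _ oS0 pS0])
      show "(\<lambda>w. Tf q w2 (\<lambda>u. op_exp (ann_comb q (fco q qh j u)) v \<mu>) w * (w - s) * (w - q*w2) / w) holomorphic_on UNIV - P"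
        by (intro holomorphic_intros Tf_holo[OF q0 w20]) (auto simp: P_def)
      show "(\<lambda>w1. 1 / w1 * (\<Sum>e\<in>{1, -1::int}. of_int e * q powi e
            * (q powi e * w1 + 1 / (q powi e * w1)) * (1 - s * w1) * (1 - q * w1 * w2) * Hop q qh j e w1 w2 v \<mu>)) holomorphic_on S0"
        by (auto intro!: holomorphic_intros H_holo simp: S0_def q0 w20)
      show "(\<lambda>w1. (1 - q * s * w2) * (1 / w1 * q * (q * w1 + 1 / (q * w1)) * (1 - w1 ^ 2) * Hop q qh j 1 w1 w2 v \<mu>)) holomorphic_on S0"
        by (intro holomorphic_intros hG)
      fix w assume "w \<in> path_image \<gamma>"
      then show "1 / w * (\<Sum>e\<in>{1, -1::int}. of_int e * q powi e
            * (q powi e * w + 1 / (q powi e * w)) * (1 - s * w) * (1 - q * w * w2) * Hop q qh j e w w2 v \<mu>) =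
          (1 - q * s * w2) * (1 / w * q * (q * w + 1 / (q * w)) * (1 - w ^ 2) * Hop q qh j 1 w w2 v \<mu>) +
          (Tf q w2 (\<lambda>u. op_exp (ann_comb q (fco q qh j u)) v \<mu>) w * (w - s) * (w - q*w2) / w -
           Tf q w2 (\<lambda>u. op_exp (ann_comb q (fco q qh j u)) v \<mu>) (1/w) * (1/w - s) * (1/w - q*w2) / (1/w) / w^2)"
        by (rule algctx.alg2[OF ctx])
    qed
    also have "\<dots> = (1 - q * s * w2) * contour_integral \<gamma> (\<lambda>w1. 1 / w1 * q * (q * w1 + 1 / (q * w1)) * (1 - w1 ^ 2) * Hop q qh j 1 w1 w2 v \<mu>)"
      by (rule contour_integral_lmul[OF contour_integrable_holomorphic_simple[OF hG oS0 vp pS0]])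
    finally show "contour_integral \<gamma> (\<lambda>w1. 1 / w1 * (\<Sum>e\<in>{1, -1::int}. of_int e * q powi e
            * (q powi e * w1 + 1 / (q powi e * w1)) * (1 - s * w1) * (1 - q * w1 * w2) * Hop q qh j e w1 w2 v \<mu>))
      = (1 - q * s * w2) * contour_integral \<gamma> (\<lambda>w1. 1 / w1 * q * (q * w1 + 1 / (q * w1)) * (1 - w1 ^ 2) * Hop q qh j 1 w1 w2 v \<mu>)" .
  qed
  have sden: "1 - s / w \<noteq> 0" "1 - s * w \<noteq> 0" if "w \<in> S0" for w
  proof -
    have w: "w \<noteq> 0" "w \<noteq> s" "w \<noteq> 1/s" using that by (auto simp: S0_def)
    show "1 - s / w \<noteq> 0" using w by (auto simp: field_simps)
    show "1 - s * w \<noteq> 0"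
    proof
      assume "1 - s * w = 0"
      then have "s \<noteq> 0" "w = 1/s" using one_minus_mul0 by auto
      then show False using w by simp
    qed
  qed
  have sw1: "s * w \<noteq> 1" if "w \<noteq> 1/s" for w
    using that one_minus_mul0[of s w] by auto
  define P3 where "P3 = {0, 1/(q*w2), w2/q, 1/s}"
  have finP3: "finite P3" by (simp add: P3_def)
  have offP3: "\<forall>p\<in>P3. p \<notin> path_image \<gamma>" using n0 no1 no2 ns' by (auto simp: P3_def)
  have offiP3: "\<forall>p\<in>P3. p \<noteq> 0 \<longrightarrow> 1/p \<notin> path_image \<gamma> \<and>
                  winding_number \<gamma> p + winding_number \<gamma> (1/p) = winding_number \<gamma> 0"
    using offiP assms(13) ns wss by (auto simp: P3_def P_def)
  show "oint \<gamma> (\<lambda>w1 \<mu>. 1 / w1 * (\<Sum>e\<in>{1, -1::int}. of_int e * q powi e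
            * (q powi e * w1 + 1 / (q powi e * w1)) * ((1 - q * w1 * w2) / (1 - s / w1))
            * Hop q qh j e w1 w2 v \<mu>))
     = (\<lambda>\<mu>. (1 - q * s * w2) * oint \<gamma> (\<lambda>w1 \<mu>. 1 / w1 * q * (q * w1 + 1 / (q * w1))
            * ((1 - w1 ^ 2) / ((1 - s / w1) * (1 - s * w1))) * Hop q qh j 1 w1 w2 v \<mu>) \<mu>)"
    unfolding oint_def
  proof (rule ext)
    fix \<mu>
    have hG: "(\<lambda>w1. 1 / w1 * q * (q * w1 + 1 / (q * w1))
            * ((1 - w1 ^ 2) / ((1 - s / w1) * (1 - s * w1))) * Hop q qh j 1 w1 w2 v \<mu>) holomorphic_on S0"
      by (auto intro!: holomorphic_intros H_holo simp: S0_def q0 w20 sw1)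
    have "contour_integral \<gamma> (\<lambda>w1. 1 / w1 * (\<Sum>e\<in>{1, -1::int}. of_int e * q powi e
            * (q powi e * w1 + 1 / (q powi e * w1)) * ((1 - q * w1 * w2) / (1 - s / w1))
            * Hop q qh j e w1 w2 v \<mu>))
      = contour_integral \<gamma> (\<lambda>w1. (1 - q * s * w2) * (1 / w1 * q * (q * w1 + 1 / (q * w1))
            * ((1 - w1 ^ 2) / ((1 - s / w1) * (1 - s * w1))) * Hop q qh j 1 w1 w2 v \<mu>))"
    proof (rule combine[OF vp cl n0 finP3 _ offP3 offiP3 _ _ oS0 pS0])
      show "(\<lambda>w. Tf q w2 (\<lambda>u. op_exp (ann_comb q (fco q qh j u)) v \<mu>) w * (w - q*w2) / (1 - s*w)) holomorphic_on UNIV - P3"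
      proof (intro holomorphic_intros Tf_holo[OF q0 w20])
        show "UNIV - P3 \<subseteq> - {0, 1 / (q * w2), w2 / q}" by (auto simp: P3_def)
        fix w assume "w \<in> UNIV - P3"
        then have w: "w \<noteq> 1/s" by (auto simp: P3_def)
        show "1 - s * w \<noteq> 0"
        proof
          assume "1 - s * w = 0"
          then have "s \<noteq> 0" "w = 1/s" using one_minus_mul0 by auto
          then show False using w by simp
        qed
      qed
      show "(\<lambda>w1. 1 / w1 * (\<Sum>e\<in>{1, -1::int}. of_int e * q powi e
            * (q powi e * w1 + 1 / (q powi e * w1)) * ((1 - q * w1 * w2) / (1 - s / w1))
            * Hop q qh j e w1 w2 v \<mu>)) holomorphic_on S0"
        by (auto intro!: holomorphic_intros H_holo simp: S0_def q0 w20 sw1)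
      show "(\<lambda>w1. (1 - q * s * w2) * (1 / w1 * q * (q * w1 + 1 / (q * w1))
            * ((1 - w1 ^ 2) / ((1 - s / w1) * (1 - s * w1))) * Hop q qh j 1 w1 w2 v \<mu>)) holomorphic_on S0"
        by (intro holomorphic_intros hG)
      fix w assume wp: "w \<in> path_image \<gamma>"
      then have "w \<noteq> s" "s * w \<noteq> 1" using sden[of w] pS0 ns by (auto simp: algebra_simps)
      then show "1 / w * (\<Sum>e\<in>{1, -1::int}. of_int e * q powi e
            * (q powi e * w + 1 / (q powi e * w)) * ((1 - q * w * w2) / (1 - s / w))
            * Hop q qh j e w w2 v \<mu>) =
          (1 - q * s * w2) * (1 / w * q * (q * w + 1 / (q * w))
            * ((1 - w ^ 2) / ((1 - s / w) * (1 - s * w))) * Hop q qh j 1 w w2 v \<mu>) +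
          (Tf q w2 (\<lambda>u. op_exp (ann_comb q (fco q qh j u)) v \<mu>) w * (w - q*w2) / (1 - s*w) -
           Tf q w2 (\<lambda>u. op_exp (ann_comb q (fco q qh j u)) v \<mu>) (1/w) * (1/w - q*w2) / (1 - s*(1/w)) / w^2)"
        by (rule algctx.alg3[OF ctx[OF wp]])
    qed
    also have "\<dots> = (1 - q * s * w2) * contour_integral \<gamma> (\<lambda>w1. 1 / w1 * q * (q * w1 + 1 / (q * w1))
            * ((1 - w1 ^ 2) / ((1 - s / w1) * (1 - s * w1))) * Hop q qh j 1 w1 w2 v \<mu>)"
      by (rule contour_integral_lmul[OF contour_integrable_holomorphic_simple[OF hG oS0 vp pS0]])
    finally show "contour_integral \<gamma> (\<lambda>w1. 1 / w1 * (\<Sum>e\<in>{1, -1::int}. of_int e * q powi e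
            * (q powi e * w1 + 1 / (q powi e * w1)) * ((1 - q * w1 * w2) / (1 - s / w1))
            * Hop q qh j e w1 w2 v \<mu>))
      = (1 - q * s * w2) * contour_integral \<gamma> (\<lambda>w1. 1 / w1 * q * (q * w1 + 1 / (q * w1))
            * ((1 - w1 ^ 2) / ((1 - s / w1) * (1 - s * w1))) * Hop q qh j 1 w1 w2 v \<mu>)" .
  qed
  show "oint \<gamma> (\<lambda>w1 \<mu>. 1 / w1 * (\<Sum>e\<in>{1, -1::int}. of_int e * q powi e
            * (q powi e * w1 + 1 / (q powi e * w1)) * w1 * (1 - q * w1 * w2) * Hop q qh j e w1 w2 v \<mu>))
     = (\<lambda>\<mu>. q ^ 2 * w2 * oint \<gamma> (\<lambda>w1 \<mu>. 1 / w1 * (q * w1 + 1 / (q * w1)) * (1 - w1 ^ 2)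
            * Hop q qh j 1 w1 w2 v \<mu>) \<mu>)"
    unfolding oint_def
  proof (rule ext)
    fix \<mu>
    have hG: "(\<lambda>w1. 1 / w1 * (q * w1 + 1 / (q * w1)) * (1 - w1 ^ 2) * Hop q qh j 1 w1 w2 v \<mu>) holomorphic_on S0"
      by (auto intro!: holomorphic_intros H_holo simp: S0_def q0 w20)
    have "contour_integral \<gamma> (\<lambda>w1. 1 / w1 * (\<Sum>e\<in>{1, -1::int}. of_int e * q powi e
            * (q powi e * w1 + 1 / (q powi e * w1)) * w1 * (1 - q * w1 * w2) * Hop q qh j e w1 w2 v \<mu>))
      = contour_integral \<gamma> (\<lambda>w1. q ^ 2 * w2 * (1 / w1 * (q * w1 + 1 / (q * w1)) * (1 - w1 ^ 2) * Hop q qh j 1 w1 w2 v \<mu>))"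
    proof (rule combine[OF vp cl n0 finP _ offP offiP _ _ oS0 pS0])
      show "(\<lambda>w. Tf q w2 (\<lambda>u. op_exp (ann_comb q (fco q qh j u)) v \<mu>) w * (w - q*w2) / w) holomorphic_on UNIV - P"
        by (intro holomorphic_intros Tf_holo[OF q0 w20]) (auto simp: P_def)
      show "(\<lambda>w1. 1 / w1 * (\<Sum>e\<in>{1, -1::int}. of_int e * q powi e
            * (q powi e * w1 + 1 / (q powi e * w1)) * w1 * (1 - q * w1 * w2) * Hop q qh j e w1 w2 v \<mu>)) holomorphic_on S0"
        by (auto intro!: holomorphic_intros H_holo simp: S0_def q0 w20)
      show "(\<lambda>w1. q ^ 2 * w2 * (1 / w1 * (q * w1 + 1 / (q * w1)) * (1 - w1 ^ 2) * Hop q qh j 1 w1 w2 v \<mu>)) holomorphic_on S0"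
        by (intro holomorphic_intros hG)
      fix w assume "w \<in> path_image \<gamma>"
      then show "1 / w * (\<Sum>e\<in>{1, -1::int}. of_int e * q powi e
            * (q powi e * w + 1 / (q powi e * w)) * w * (1 - q * w * w2) * Hop q qh j e w w2 v \<mu>) =
          q ^ 2 * w2 * (1 / w * (q * w + 1 / (q * w)) * (1 - w ^ 2) * Hop q qh j 1 w w2 v \<mu>) +
          (Tf q w2 (\<lambda>u. op_exp (ann_comb q (fco q qh j u)) v \<mu>) w * (w - q*w2) / w -
           Tf q w2 (\<lambda>u. op_exp (ann_comb q (fco q qh j u)) v \<mu>) (1/w) * (1/w - q*w2) / (1/w) / w^2)"
        by (rule algctx.alg4[OF ctx])
    qed
    also have "\<dots> = q ^ 2 * w2 * contour_integral \<gamma> (\<lambda>w1. 1 / w1 * (q * w1 + 1 / (q * w1)) * (1 - w1 ^ 2) * Hop q qh j 1 w1 w2 v \<mu>)"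
      by (rule contour_integral_lmul[OF contour_integrable_holomorphic_simple[OF hG oS0 vp pS0]])
    finally show "contour_integral \<gamma> (\<lambda>w1. 1 / w1 * (\<Sum>e\<in>{1, -1::int}. of_int e * q powi e
            * (q powi e * w1 + 1 / (q powi e * w1)) * w1 * (1 - q * w1 * w2) * Hop q qh j e w1 w2 v \<mu>))
      = q ^ 2 * w2 * contour_integral \<gamma> (\<lambda>w1. 1 / w1 * (q * w1 + 1 / (q * w1)) * (1 - w1 ^ 2) * Hop q qh j 1 w1 w2 v \<mu>)" .
  qed
  have inv: "Hop q qh j 1 w (inverse w2) v \<mu> = Hop q qh j 1 w w2 v \<mu>" for w \<mu>
    by (simp add: Hop_pos divide_inverse mult_ac)
  show "oint \<gamma> (\<lambda>w1 \<mu>. 1 / w1 * (q * w1 + 1 / (q * w1))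
            * ((1 - w1 ^ 2) / ((1 - s / w1) * (1 - s * w1))) * Hop q qh j 1 w1 w2 v \<mu>)
     = oint \<gamma> (\<lambda>w1 \<mu>. 1 / w1 * (q * w1 + 1 / (q * w1))
            * ((1 - w1 ^ 2) / ((1 - s / w1) * (1 - s * w1))) * Hop q qh j 1 w1 (inverse w2) v \<mu>)"
    by (simp only: inv)
qed


end
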